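(* Let $D$ be a normalized 2-page book drawing of $K_n$, let $D_1$ be the drawing of $K_{n-1}$ obtained by deleting vertex $n$ and its incident edges, and let $p$ be an integer with $0\le p\le\lfloor n/2\rfloor-2$. Suppose that $E_{\le k}(D,D_1)=\binom{k+2}2$ for all $0\le k\le p$. Then for each $1\le i\le p+1$, row $i$ of $M(D)$ contains exactly one entry representing a $(D,D_1)$-invariant $k$-edge for each $k$ with $i-1\le k\le p$, and no entry representing a $(D,D_1)$-invariant $j$-edge with $j\le i-2$; and every row $i$ with $i\ge p+2$ contains no entry representing a $(D,D_1)$-invariant $j$-edge with $j\le p$.
   Context: Normalized 2-page book drawing of $K_n$: vertices $(1,0),\dots,(n,0)$ labelled $1,\dots,n$; edges $i(i+1)$ on the spine; edge $1n$ in the upper half-plane; every other edge $ij$ a semicircle over $[i,j]$ in the upper or lower half-plane. $M(D)$ has entries $(i,j)$, $1\le i<j\le n$ (row $i$, column $j$), entry $(i,j)$ representing edge $ij$. In a good drawing of $K_m$, for distinct vertices $p,q,r$, $r$ is on the left (right) of $\overrightarrow{pq}$ if the triangle with edges $pq,qr,rp$ traced in order $p,q,r$ is counterclockwise (clockwise); an edge is a $k$-edge if exactly $k$ of the other $m-2$ vertices lie on one side of it, and it has a unique such index in $\{0,\dots,\lfloor m/2\rfloor-1\}$. An edge $ij$ of $D$ not incident to $n$ is a $(D,D_1)$-invariant $k$-edge if its index in $D$ is $k$ and it is also a $k$-edge in $D_1$ (exactly $k$ vertices of $D_1$ on one side). $E_{\le k}(D,D_1)$ is the number of $(D,D_1)$-invariant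 $j$-edges with $0\le j\le k$. *)

theory Defs
  imports Main
begin

text \<open>A 2-page book drawing of K_n with vertices 1..n on the spine (in this order)
is encoded by a predicate up: for i < j, up i j says that the edge ij is drawn as a
semicircle in the upper half-plane (otherwise in the lower half-plane).  For spine
edges i(i+1) the value of up is irrelevant (never consulted).\<close>

definition normalized_book_drawing :: "nat \<Rightarrow> (nat \<Rightarrow> nat \<Rightarrow> bool) \<Rightarrow> bool" where
  "normalized_book_drawing n up \<longleftrightarrow> 3 \<le> n \<and> up 1 n"

text \<open>With a < b < c the sorted vertices, traversing a,b,c goes rightwards along the edges
ab, bc and returns along the arc ac; this is counterclockwise iff ac is in the upper
page.  Cyclic shifts keep the orientation, other permutations reverse it.\<close>

definition ccw_book :: "(nat \<Rightarrow> nat \<Rightarrow> bool) \<Rightarrow> nat \<Rightarrow> nat \<Rightarrow> nat \<Rightarrow> bool" where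
  "ccw_book up p q r =
     (let a = min p (min q r); c = max p (max q r) in
      if (p < q \<and> q < r) \<or> (q < r \<and> r < p) \<or> (r < p \<and> p < q) then up a c else \<not> up a c)"

definition left_count :: "(nat \<Rightarrow> nat \<Rightarrow> bool) \<Rightarrow> nat set \<Rightarrow> nat \<Rightarrow> nat \<Rightarrow> nat" where
  "left_count up V p q = card {r \<in> V - {p, q}. ccw_book up p q r}"

definition is_kedge :: "(nat \<Rightarrow> nat \<Rightarrow> bool) \<Rightarrow> nat set \<Rightarrow> nat \<Rightarrow> nat \<Rightarrow> nat \<Rightarrow> bool" where
  "is_kedge up V k p q \<longleftrightarrow>
     left_count up V p q = k \<or> card V - 2 - left_count up V p q = k"

definition edge_index :: "(nat \<Rightarrow> nat \<Rightarrow> bool) \<Rightarrow> nat set \<Rightarrow> nat \<Rightarrow> nat \<Rightarrow> nat" where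
  "edge_index up V p q = min (left_count up V p q) (card V - 2 - left_count up V p q)"

definition inv_kedge :: "nat \<Rightarrow> (nat \<Rightarrow> nat \<Rightarrow> bool) \<Rightarrow> nat \<Rightarrow> nat \<Rightarrow> nat \<Rightarrow> bool" where
  "inv_kedge n up k i j \<longleftrightarrow>
     1 \<le> i \<and> i < j \<and> j < n \<and>
     edge_index up {1..n} i j = k \<and> is_kedge up {1..n-1} k i j"

definition E_le :: "nat \<Rightarrow> (nat \<Rightarrow> nat \<Rightarrow> bool) \<Rightarrow> nat \<Rightarrow> nat" where
  "E_le n up k = card {(i, j). \<exists>k'\<le>k. inv_kedge n up k' i j}"

end

theory Submission
  imports Defs
begin


lemma tri0: "(\<Sum>i\<in>{1..k+1}. k+2-i) = (k+2) choose 2"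
proof (induction k)
  case 0 then show ?case by (simp add: choose_two)
next
  case (Suc k)
  have "(\<Sum>i\<in>{1..Suc k+1}. Suc k+2-i) = (\<Sum>i\<in>{1..k+1}. (k+2-i) + 1) + 1"
    by (simp add: Suc_diff_le)
  also have "\<dots> = (\<Sum>i=1..k+1. k+2-i) + (k+1) + 1" by (subst sum.distrib) simp
  also have "\<dots> = (k+2 choose 2) + (k+1) + 1" using Suc by simp
  also have "\<dots> = Suc k + 2 choose 2" by (simp add: numeral_2_eq_2)
  finally show ?case .
qed

lemma tri: assumes "k+2 \<le> m" shows "(\<Sum>i\<in>{1..<m}. k+2-i) = (k+2) choose 2"
proof -
  have e: "{1..<m} = {1..k+1} \<union> {k+2..<m}" using assms by auto
  have "(\<Sum>i\<in>{1..<m}. k+2-i) = (\<Sum>i\<in>{1..k+1}. k+2-i) + (\<Sum>i\<in>{k+2..<m}. k+2-i)"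
    unfolding e by (rule sum.union_disjoint) auto
  also have "(\<Sum>i\<in>{k+2..<m}. k+2-i) = 0" by simp
  finally show ?thesis using tri0 by simp
qed

lemma rank_count:
  fixes f :: "'a \<Rightarrow> 'b::linorder"
  assumes "finite A" "inj_on f A"
  shows "min c (card A) \<le> card {x\<in>A. card {y\<in>A. f y < f x} < c}"
using assms
proof (induction "card A" arbitrary: A)
  case 0 then show ?case by simp
next
  case (Suc m)
  then have ne: "A \<noteq> {}" by auto
  have "Max (f ` A) \<in> f ` A" using Suc.prems(1) ne by simp
  then obtain a where a: "a \<in> A" "f a = Max (f ` A)" by force
  define B where "B = A - {a}"
  have fin: "finite B" and cardB: "card B = m" using Suc a by (auto simp: B_def)
  have injB: "inj_on f B" using Suc.prems(2) by (auto simp: B_def intro: inj_on_subset)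
  have lt: "\<forall>y\<in>B. f y < f a"
  proof
    fix y assume y: "y \<in> B"
    then have "f y \<le> f a" using a Suc.prems(1) by (auto simp: B_def)
    moreover have "f y \<noteq> f a" using y a Suc.prems(2) by (auto simp: B_def inj_on_def)
    ultimately show "f y < f a" by simp
  qed
  have r1: "\<forall>x\<in>B. {y\<in>A. f y < f x} = {y\<in>B. f y < f x}"
  proof
    fix x assume "x \<in> B"
    then have "f x < f a" using lt by blast
    then show "{y\<in>A. f y < f x} = {y\<in>B. f y < f x}" unfolding B_def by auto
  qed
  have r2: "{y\<in>A. f y < f a} = B"
    using lt a by (auto simp: B_def)
  have eq: "{x\<in>A. card{y\<in>A. f y<f x} < c} = {x\<in>B. card{y\<in>B. f y<f x} < c} \<union> (if m < c then {a} else {})"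
  proof (rule set_eqI)
    fix x show "x \<in> {x\<in>A. card{y\<in>A. f y<f x} < c} \<longleftrightarrow> x \<in> {x\<in>B. card{y\<in>B. f y<f x} < c} \<union> (if m < c then {a} else {})"
    proof (cases "x = a")
      case True then show ?thesis using r2 cardB a by (auto simp: B_def)
    next
      case False then show ?thesis using r1 by (auto simp: B_def)
    qed
  qed
  have "card {x\<in>A. card{y\<in>A. f y<f x} < c} = card {x\<in>B. card{y\<in>B. f y<f x} < c} + (if m < c then 1 else 0)"
    unfolding eq using fin by (auto simp: B_def card_insert_if)
  moreover have "min c m \<le> card {x\<in>B. card{y\<in>B. f y<f x} < c}"
    using Suc.hyps(1)[of B] cardB fin injB by simp
  ultimately show ?case using Suc.hyps(2) by auto
qed



definition Sopp :: "nat \<Rightarrow> (nat\<Rightarrow>nat\<Rightarrow>bool) \<Rightarrow> nat \<Rightarrow> nat \<Rightarrow> nat" where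
  "Sopp n up i j = card {r \<in> {1..n-1} - {i,j}. ccw_book up i j r \<noteq> up i n}"

lemma ccw_gt: "i<j \<Longrightarrow> j<r \<Longrightarrow> ccw_book up i j r = up i r"
  by (simp add: ccw_book_def Let_def min_def max_def)

lemma ccw_mid: "i<r \<Longrightarrow> r<j \<Longrightarrow> ccw_book up i j r = (\<not> up i j)"
  by (auto simp add: ccw_book_def Let_def min_def max_def)

lemma inv_char:
  assumes "2*k+4 \<le> n"
  shows "inv_kedge n up k i j \<longleftrightarrow> 1\<le>i \<and> i<j \<and> j<n \<and> Sopp n up i j = k"
proof (cases "1\<le>i \<and> i<j \<and> j<n")
  case False then show ?thesis by (auto simp: inv_kedge_def)
next
  case True
  then have ij: "1\<le>i" "i<j" "j<n" by auto
  define X where "X = {1..n-1} - {i,j}"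
  have sub: "{i,j} \<subseteq> {1..n-1}" using ij by auto
  have cX: "card X = n-3" unfolding X_def using ij
    by (subst card_Diff_subset[OF _ sub]) auto
  have e1: "{1..n} - {i,j} = insert n X" using ij by (auto simp: X_def)
  have nX: "n \<notin> X" by (auto simp: X_def)
  have finX: "finite X" by (simp add: X_def)
  define L1 where "L1 = left_count up {1..n-1} i j"
  have L1def: "L1 = card {r\<in>X. ccw_book up i j r}" by (simp add: L1_def left_count_def X_def)
  have ccwn: "ccw_book up i j n = up i n" using ij by (simp add: ccw_gt)
  have L: "left_count up {1..n} i j = L1 + (if up i n then 1 else 0)"
  proof -
    have "{r \<in> insert n X. ccw_book up i j r} = (if up i n then insert n {r\<in>X. ccw_book up i j r} else {r\<in>X. ccw_book up i j r})"
      using ccwn by auto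
    then show ?thesis unfolding left_count_def e1 L1def using nX finX by auto
  qed
  have L1le: "L1 \<le> n-3" unfolding L1def using cX finX
    by (metis (no_types, lifting) card_mono mem_Collect_eq subsetI)
  have S: "Sopp n up i j = (if up i n then n-3 - L1 else L1)"
  proof (cases "up i n")
    case True
    have "{r\<in>X. ccw_book up i j r \<noteq> up i n} = X - {r\<in>X. ccw_book up i j r}" using True by auto
    then have "Sopp n up i j = card X - L1" unfolding Sopp_def L1def X_def[symmetric]
      using finX by (simp add: card_Diff_subset)
    then show ?thesis using True cX by simp
  next
    case False
    then show ?thesis unfolding Sopp_def L1def X_def[symmetric] by simp
  qed
  have cn: "card {1..n} = n" "card {1..n-1} = n-1" by auto
  show ?thesis using True L S L1le assms
    unfolding inv_kedge_def edge_index_def is_kedge_def cn L1_def[symmetric]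
    by (cases "up i n") auto
qed

lemma row_bound:
  assumes "1 \<le> i" "k+3 \<le> n"
  shows "k+2-i \<le> card {j. i<j \<and> j<n \<and> Sopp n up i j \<le> k}"
proof -
  define J where "J = {i<..<n}"
  define key where "key j = (if j = i+1 \<or> up i j \<noteq> up i n then - int j else int j)" for j
  define rk where "rk j = card {r\<in>J. key r < key j}" for j
  have finJ: "finite J" and cJ: "card J = n-1-i" by (auto simp: J_def)
  have inj: "inj_on key J" by (auto simp: inj_on_def key_def J_def split: if_splits)
  have rc: "min (k+2-i) (card J) \<le> card {j\<in>J. rk j < k+2-i}"
    using rank_count[OF finJ inj] unfolding rk_def by blast
  have m: "min (k+2-i) (card J) = k+2-i" using cJ assms by simp
  have Sle: "Sopp n up i j \<le> (i-1) + rk j" if j: "j \<in> J" for j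
  proof -
    have "{r \<in> {1..n-1} - {i,j}. ccw_book up i j r \<noteq> up i n} \<subseteq> {1..<i} \<union> {r\<in>J. key r < key j}"
    proof
      fix r assume r: "r \<in> {r \<in> {1..n-1} - {i,j}. ccw_book up i j r \<noteq> up i n}"
      then have r1: "1 \<le> r" "r \<le> n-1" "r \<noteq> i" "r \<noteq> j" and op: "ccw_book up i j r \<noteq> up i n" by auto
      have ij: "i < j" "j < n" using j by (auto simp: J_def)
      consider "r<i" | "i<r \<and> r<j" | "j<r" using r1 by linarith
      then show "r \<in> {1..<i} \<union> {r\<in>J. key r < key j}"
      proof cases
        case 1 then show ?thesis using r1 by auto
      next
        case 2
        then have "up i j = up i n" using op ccw_mid[of i r j up] by auto
        moreover have "j \<noteq> i+1" using 2 by auto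
        ultimately have "key j = int j" by (simp add: key_def)
        moreover have "key r \<le> int r" by (simp add: key_def)
        ultimately show ?thesis using 2 ij by (auto simp: J_def)
      next
        case 3
        then have "up i r \<noteq> up i n" using op ccw_gt[of i j r up] ij by auto
        then have "key r = - int r" by (simp add: key_def)
        moreover have "key j \<ge> - int j" by (simp add: key_def)
        ultimately show ?thesis using 3 ij r1 by (auto simp: J_def)
      qed
    qed
    then have "Sopp n up i j \<le> card ({1..<i} \<union> {r\<in>J. key r < key j})"
      unfolding Sopp_def by (rule card_mono[rotated]) (simp add: J_def)
    also have "\<dots> \<le> card {1..<i} + rk j" unfolding rk_def by (rule card_Un_le)
    finally show ?thesis by simp
  qed
  have "{j\<in>J. rk j < k+2-i} \<subseteq> {j. i<j \<and> j<n \<and> Sopp n up i j \<le> k}"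
  proof
    fix j assume "j \<in> {j\<in>J. rk j < k+2-i}"
    then have "j \<in> J" "rk j < k+2-i" by auto
    then show "j \<in> {j. i<j \<and> j<n \<and> Sopp n up i j \<le> k}" using Sle[of j] assms by (auto simp: J_def)
  qed
  then have "card {j\<in>J. rk j < k+2-i} \<le> card {j. i<j \<and> j<n \<and> Sopp n up i j \<le> k}"
    by (rule card_mono[rotated]) auto
  then show ?thesis using rc m by simp
qed

lemma inv_bounds: "inv_kedge n up k i j \<Longrightarrow> 1 \<le> i \<and> i<j \<and> j<n"
  unfolding inv_kedge_def by blast

lemma inv_idx: "inv_kedge n up k i j \<Longrightarrow> inv_kedge n up k' i j \<Longrightarrow> k = k'"
  unfolding inv_kedge_def by blast

theorem lemma9:
  fixes n p :: nat and up :: "nat \<Rightarrow> nat \<Rightarrow> bool"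
  assumes "normalized_book_drawing n up"
    and "p + 2 \<le> n div 2"
    and "\<forall>k\<le>p. E_le n up k = (k + 2) choose 2"
  shows "(\<forall>i. 1 \<le> i \<and> i \<le> p + 1 \<longrightarrow>
            (\<forall>k. i - 1 \<le> k \<and> k \<le> p \<longrightarrow> (\<exists>!j. inv_kedge n up k i j)) \<and>
            (\<forall>j k. inv_kedge n up k i j \<longrightarrow> \<not> k + 2 \<le> i))
       \<and> (\<forall>i. p + 2 \<le> i \<longrightarrow> (\<forall>j k. inv_kedge n up k i j \<longrightarrow> \<not> k \<le> p))"
proof -
  have np: "2*p+4 \<le> n" using assms(2) by linarith
  define Row where "Row k i = {j. \<exists>k'\<le>k. inv_kedge n up k' i j}" for k i
  have RowS: "Row k i = {j. i<j \<and> j<n \<and> Sopp n up i j \<le> k}" if "k \<le> p" "1 \<le> i" for k i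
  proof -
    have c: "inv_kedge n up k' i j \<longleftrightarrow> i<j \<and> j<n \<and> Sopp n up i j = k'" if "k' \<le> k" for k' j
    proof -
      have "2*k'+4 \<le> n" using np \<open>k \<le> p\<close> that by linarith
      then have "inv_kedge n up k' i j \<longleftrightarrow> 1\<le>i \<and> i<j \<and> j<n \<and> Sopp n up i j = k'"
        by (rule inv_char)
      with \<open>1 \<le> i\<close> show ?thesis by simp
    qed
    show ?thesis
    proof (rule set_eqI)
      fix j
      show "j \<in> Row k i \<longleftrightarrow> j \<in> {j. i<j \<and> j<n \<and> Sopp n up i j \<le> k}"
      proof
        assume "j \<in> Row k i"
        then obtain k' where k': "k' \<le> k" "inv_kedge n up k' i j" unfolding Row_def by blast
        then show "j \<in> {j. i<j \<and> j<n \<and> Sopp n up i j \<le> k}" using c[OF k'(1)] by simp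
      next
        assume "j \<in> {j. i<j \<and> j<n \<and> Sopp n up i j \<le> k}"
        then have h: "i<j" "j<n" "Sopp n up i j \<le> k" by auto
        then have "inv_kedge n up (Sopp n up i j) i j" using c[OF h(3)] by simp
        then show "j \<in> Row k i" unfolding Row_def using h(3) by blast
      qed
    qed
  qed
  have Rowsub: "Row k i \<subseteq> {..<n}" for k i using inv_bounds unfolding Row_def by blast
  have Rowfin: "finite (Row k i)" for k i using Rowsub by (rule finite_subset) simp
  have Esum: "E_le n up k = (\<Sum>i\<in>{1..<n}. card (Row k i))" for k
  proof -
    have "{(i, j). \<exists>k'\<le>k. inv_kedge n up k' i j} = Sigma {1..<n} (Row k)"
      unfolding Row_def by (auto dest: inv_bounds)
    then show ?thesis unfolding E_le_def using Rowfin by (simp add: card_SigmaI)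
  qed
  have exact: "card (Row k i) = k+2-i" if k: "k \<le> p" and i: "i \<in> {1..<n}" for k i
  proof -
    have lb: "\<forall>i\<in>{1..<n}. k+2-i \<le> card (Row k i)"
    proof
      fix i assume i: "i \<in> {1..<n}"
      have "k+3 \<le> n" using k np by linarith
      then have "k+2-i \<le> card {j. i<j \<and> j<n \<and> Sopp n up i j \<le> k}"
        using row_bound[of i k n up] i by simp
      then show "k+2-i \<le> card (Row k i)" using RowS[OF k, of i] i by simp
    qed
    have "(\<Sum>i\<in>{1..<n}. card (Row k i)) = (\<Sum>i\<in>{1..<n}. k+2-i)"
      using Esum[of k] assms(3) k tri[of k n] np by simp
    show ?thesis
    proof (rule ccontr)
      assume "card (Row k i) \<noteq> k+2-i"
      then have "k+2-i < card (Row k i)" using lb i by force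
      then have "(\<Sum>i\<in>{1..<n}. k+2-i) < (\<Sum>i\<in>{1..<n}. card (Row k i))"
        using lb i by (intro sum_strict_mono_ex1) auto
      then show False using \<open>(\<Sum>i\<in>{1..<n}. card (Row k i)) = (\<Sum>i\<in>{1..<n}. k+2-i)\<close> by simp
    qed
  qed
  have F: "i \<le> k+1" if "inv_kedge n up k i j" "k \<le> p" for i j k
  proof (rule ccontr)
    assume "\<not> i \<le> k+1"
    have i: "i \<in> {1..<n}" using inv_bounds[OF that(1)] by auto
    have "j \<in> Row k i" using that(1) by (auto simp: Row_def)
    moreover have "card (Row k i) = 0" using exact[OF that(2) i] \<open>\<not> i \<le> k+1\<close> by simp
    ultimately show False using Rowfin[of k i] by auto
  qed
  have U: "card {j. inv_kedge n up k i j} = 1" if "1 \<le> i" "i \<le> p+1" "i-1 \<le> k" "k \<le> p" for i k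
  proof -
    have i: "i \<in> {1..<n}" using that np by auto
    have "k+2-i = card (Row k i)" using exact[OF that(4) i] by simp
    show ?thesis
    proof (cases k)
      case 0
      then have "Row k i = {j. inv_kedge n up k i j}" by (auto simp: Row_def)
      then show ?thesis using exact[OF that(4) i] that 0 by simp
    next
      case (Suc k0)
      have e: "Row k i = Row k0 i \<union> {j. inv_kedge n up k i j}"
      proof (rule set_eqI)
        fix j
        show "j \<in> Row k i \<longleftrightarrow> j \<in> Row k0 i \<union> {j. inv_kedge n up k i j}"
        proof
          assume "j \<in> Row k i"
          then obtain k' where k': "k' \<le> k" "inv_kedge n up k' i j" unfolding Row_def by blast
          show "j \<in> Row k0 i \<union> {j. inv_kedge n up k i j}"
          proof (cases "k' = k")
            case True then show ?thesis using k' by simp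
          next
            case False
            then have "k' \<le> k0" using k' Suc by simp
            then show ?thesis using k'(2) unfolding Row_def by blast
          qed
        next
          assume "j \<in> Row k0 i \<union> {j. inv_kedge n up k i j}"
          then consider (a) "j \<in> Row k0 i" | (b) "inv_kedge n up k i j" by blast
          then show "j \<in> Row k i"
          proof cases
            case a
            then obtain k' where k': "k' \<le> k0" "inv_kedge n up k' i j" unfolding Row_def by blast
            have "k' \<le> k" using k'(1) Suc by simp
            then show ?thesis using k'(2) unfolding Row_def by blast
          next
            case b
            have "k \<le> k" by simp
            then show ?thesis using b unfolding Row_def by blast
          qed
        qed
      qed
      have d: "Row k0 i \<inter> {j. inv_kedge n up k i j} = {}"
      proof -
        have False if jr: "j \<in> Row k0 i" and ji: "inv_kedge n up k i j" for j
        proof -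
          obtain k' where k': "k' \<le> k0" "inv_kedge n up k' i j" using jr unfolding Row_def by blast
          have "k' = k" using inv_idx[OF k'(2) ji] .
          then show False using k'(1) Suc by simp
        qed
        then show ?thesis by blast
      qed
      have fe: "finite {j. inv_kedge n up k i j}" using Rowfin[of k i] e by simp
      have "card (Row k i) = card (Row k0 i) + card {j. inv_kedge n up k i j}"
        unfolding e using d Rowfin[of k0 i] fe by (rule card_Un_disjoint[rotated 2])
      moreover have "card (Row k0 i) = k0+2-i" using exact[of k0 i] Suc that i by simp
      moreover have "card (Row k i) = k+2-i" using exact that i by simp
      ultimately show ?thesis using Suc that by simp
    qed
  qed
  show ?thesis
  proof (intro conjI allI impI)
    fix i k assume a: "1 \<le> i \<and> i \<le> p + 1" "i - 1 \<le> k \<and> k \<le> p"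
    then have "card {j. inv_kedge n up k i j} = 1" using U by auto
    then obtain x where "{j. inv_kedge n up k i j} = {x}" by (auto simp: card_1_singleton_iff)
    then have "\<And>j. inv_kedge n up k i j \<longleftrightarrow> j = x" by (simp add: set_eq_iff)
    then show "\<exists>!j. inv_kedge n up k i j" by (intro ex1I[of _ x]) auto
  next
    fix i j k assume a: "1 \<le> i \<and> i \<le> p + 1" "inv_kedge n up k i j"
    show "\<not> k + 2 \<le> i"
    proof
      assume "k+2 \<le> i"
      then have "k \<le> p" using a by simp
      then show False using F[OF a(2)] \<open>k+2 \<le> i\<close> by simp
    qed
  next
    fix i j k assume a: "p + 2 \<le> i" "inv_kedge n up k i j"
    show "\<not> k \<le> p" using F[OF a(2)] a(1) by auto
  qed
qed

end
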